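(* Let $\nu\ge3$ be a square-free integer with $\nu\equiv2$ or $3\pmod 4$, and for $n\ge0$ let $P_n(t)=(t^2-\nu)^{\circ n}\in\mathbb{Z}[t]$ (so $P_0(t)=t$), with constant term $C_n$. Let $p$ be an odd prime not dividing $\nu$ such that $p$ divides $C_n$ for some $n\ge1$, and let $n(p)$ be the least positive integer $n$ with $p\mid C_n$. Then for any non-negative integers $k,\ell$ which are distinct modulo $n(p)$, the reductions $\bar P_k$ and $\bar P_\ell$ modulo $p$ are coprime in $\mathbb{F}_p[t]$. *)

theory Defs
  imports "HOL-Computational_Algebra.Computational_Algebra" "Berlekamp_Zassenhaus.Finite_Field"
begin

fun iterP :: "int \<Rightarrow> nat \<Rightarrow> int poly" where
  "iterP nu 0 = [:0, 1:]"
| "iterP nu (Suc n) = pcompose [:-nu, 0, 1:] (iterP nu n)"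

definition constC :: "int \<Rightarrow> nat \<Rightarrow> int" where
  "constC nu n = Polynomial.coeff (iterP nu n) 0"

end

theory Submission
  imports Defs
begin

lemma iterP_add: "iterP nu (a + b) = pcompose (iterP nu a) (iterP nu b)"
  by (induction a) (simp_all add: pcompose_assoc)

lemma constC_add: "constC nu (a + b) = poly (iterP nu a) (constC nu b)"
  unfolding constC_def by (simp add: iterP_add poly_0_coeff_0[symmetric] poly_pcompose)

lemma poly_dvd_diff:
  fixes q :: "int poly"
  assumes "m dvd x - y"
  shows "m dvd poly q x - poly q y"
proof (induction q)
  case (pCons a q)
  have "poly (pCons a q) x - poly (pCons a q) y = x * (poly q x - poly q y) + (x - y) * poly q y"
    by (simp add: algebra_simps)
  then show ?case using pCons assms by simp
qed simp

lemma constC_period: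
  assumes "p dvd constC nu N"
  shows "p dvd constC nu (m + N) - constC nu m"
proof -
  have "constC nu m = poly (iterP nu m) (constC nu 0)"
    using constC_add[of nu m 0] by simp
  moreover have "constC nu 0 = 0" by (simp add: constC_def)
  ultimately show ?thesis using constC_add[of nu m N] poly_dvd_diff[of p "constC nu N" 0 "iterP nu m"] assms
    by simp
qed

lemma constC_dvd_least:
  assumes "\<exists>n\<ge>1. p dvd constC nu n"
  defines "N \<equiv> LEAST n. n \<ge> 1 \<and> p dvd constC nu n"
  shows "d \<ge> 1 \<Longrightarrow> p dvd constC nu d \<Longrightarrow> N dvd d"
proof (induction d rule: less_induct)
  case (less d)
  have N: "N \<ge> 1" "p dvd constC nu N"
    using LeastI_ex[OF assms(1)] unfolding N_def by auto
  have "N \<le> d" unfolding N_def using less.prems by (intro Least_le) auto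
  show ?case
  proof (cases "d = N")
    case False
    then have d: "d = (d - N) + N" "d - N \<ge> 1" using \<open>N \<le> d\<close> by auto
    have "p dvd constC nu (d - N + N) - constC nu (d - N)"
      by (rule constC_period[OF N(2)])
    moreover have "p dvd constC nu (d - N + N)" using less.prems d(1) by simp
    ultimately have "p dvd constC nu (d - N + N) - (constC nu (d - N + N) - constC nu (d - N))"
      by (rule dvd_diff[rotated])
    then have "p dvd constC nu (d - N)" by simp
    then have "N dvd d - N" using less.IH[of "d - N"] d N by auto
    then show ?thesis using d(1) by (metis dvd_add_triv_right_iff)
  qed simp
qed

lemma map_const: "map_poly (of_int :: int \<Rightarrow> 'p::prime_card mod_ring) [:x:] = [:of_int x:]"
  by (cases "x = 0") (auto simp: map_poly_def)

lemma main_coprime: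
  fixes nu :: int
  assumes "\<not> int CARD('p::prime_card) dvd constC nu d"
  shows "coprime (map_poly (of_int :: int \<Rightarrow> 'p mod_ring) (iterP nu k))
                 (map_poly (of_int :: int \<Rightarrow> 'p mod_ring) (iterP nu (d + k)))"
proof -
  obtain R where R: "iterP nu d = pCons (constC nu d) R"
    by (metis constC_def pCons_cases coeff_pCons_0)
  have eq: "iterP nu (d + k) = [:constC nu d:] + iterP nu k * pcompose R (iterP nu k)"
    by (simp add: iterP_add R pcompose_pCons)
  define F where "F = map_poly (of_int :: int \<Rightarrow> 'p mod_ring)"
  have c0: "(of_int (constC nu d) :: 'p mod_ring) \<noteq> 0"
    using assms
    by (metis (mono_tags, lifting) dvd_0_left_iff dvd_nat_abs_iff
    gcd_nat.order_iff_strict nat_abs_dvd_iff of_int_hom.hom_dvd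
    of_int_of_nat_eq of_nat_0_mod_ring_dvd of_nat_card_eq_0)
  have Feq: "F (iterP nu (d + k)) = [:of_int (constC nu d):] + F (iterP nu k) * F (pcompose R (iterP nu k))"
    unfolding eq F_def by (simp add: hom_distribs map_const)
  show ?thesis
    unfolding F_def[symmetric]
  proof (rule coprimeI)
    fix c assume "c dvd F (iterP nu k)" "c dvd F (iterP nu (d + k))"
    then have "c dvd F (iterP nu (d + k)) - F (iterP nu k) * F (pcompose R (iterP nu k))"
      by (simp add: dvd_diff)
    then have "c dvd [:of_int (constC nu d):]" using Feq by simp
    moreover have "is_unit [:(of_int (constC nu d) :: 'p mod_ring):]"
      using c0 by (simp add: is_unit_const_poly_iff)
    ultimately show "is_unit c" by (rule dvd_unit_imp_unit)
  qed
qed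

theorem lemma4p6:
  fixes nu :: int and k l :: nat
  defines "p \<equiv> int CARD('p::prime_card)"
  assumes "nu \<ge> 3" and "squarefree nu" and "nu mod 4 = 2 \<or> nu mod 4 = 3"
    and "odd p" and "\<not> p dvd nu"
    and "\<exists>n\<ge>1. p dvd constC nu n"
    and "k mod (LEAST n. n \<ge> 1 \<and> p dvd constC nu n) \<noteq> l mod (LEAST n. n \<ge> 1 \<and> p dvd constC nu n)"
  shows "coprime (map_poly (of_int :: int \<Rightarrow> 'p mod_ring) (iterP nu k))
                 (map_poly (of_int :: int \<Rightarrow> 'p mod_ring) (iterP nu l))"
proof -
  define N where "N = (LEAST n. n \<ge> 1 \<and> p dvd constC nu n)"
  have ndvd: "\<not> p dvd constC nu d" if "d \<ge> 1" "k mod N \<noteq> (d + k) mod N" for d k :: nat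
  proof
    assume "p dvd constC nu d"
    then have "N dvd d" using constC_dvd_least[OF assms(7) that(1)] unfolding N_def by blast
    then have "(d + k) mod N = k mod N" by auto
    with that show False by simp
  qed
  have ne: "k mod N \<noteq> l mod N" using assms(8) unfolding N_def .
  show ?thesis
  proof (cases "k < l")
    case True
    then have l: "l = (l - k) + k" by simp
    have "\<not> p dvd constC nu (l - k)" using ndvd[of "l - k" k] ne l True by simp
    then show ?thesis using main_coprime[of nu "l - k" k] l unfolding p_def by metis
  next
    case False
    then have k: "k = (k - l) + l" by simp
    have "k \<noteq> l" using ne by auto
    then have "\<not> p dvd constC nu (k - l)" using ndvd[of "k - l" l] ne k False by simp
    then show ?thesis using main_coprime[of nu "k - l" l] k coprime_commute unfolding p_def by metis
  qed
qed

end
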